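(* For every real $n\times p$ matrix $X$ with nonzero columns, every $S\subset\{1,\dots,p\}$ and every $s>0$, \[ \phi(S)^2\ge\bar\phi(1)^2-15|S|\,\mathrm{mc}(X),\qquad \bar\phi(s)^2\ge\tilde\phi(s)^2\ge\bar\phi(1)^2-s\,\mathrm{mc}(X). \]
   Context: $X_{\cdot,i}$ is the $i$th column, $\|X\|=\max_i\|X_{\cdot,i}\|_2$, $S_\beta=\{i:\beta_i\ne0\}$, $\beta_S=(\beta_i)_{i\in S}$. $\phi(S)=\inf\{\|X\beta\|_2|S|^{1/2}/(\|X\|\|\beta_S\|_1):\beta\in\mathbb R^p,\|\beta_{S^c}\|_1\le7\|\beta_S\|_1,\beta_S\ne0\}$; $\bar\phi(s)=\inf\{\|X\beta\|_2|S_\beta|^{1/2}/(\|X\|\|\beta\|_1):0\ne|S_\beta|\le s\}$; $\tilde\phi(s)=\inf\{\|X\beta\|_2/(\|X\|\|\beta\|_2):0\ne|S_\beta|\le s\}$; $\mathrm{mc}(X)=\max_{i\ne j}|\langle X_{\cdot,i},X_{\cdot,j}\rangle|/(\|X_{\cdot,i}\|_2\|X_{\cdot,j}\|_2)$. *)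

theory Defs
  imports "HOL-Analysis.Analysis"
begin

text \<open>An n x p real matrix is X :: real^'p^'n (rows indexed by 'n, columns by 'p).\<close>

definition colmax :: "real^'p::finite^'n::finite \<Rightarrow> real" where
  "colmax X = Max (range (\<lambda>i. norm (column i X)))"

definition supp :: "real^'p::finite \<Rightarrow> 'p set" where
  "supp \<beta> = {i. \<beta> $ i \<noteq> 0}"

definition l1on :: "'p::finite set \<Rightarrow> real^'p \<Rightarrow> real" where
  "l1on S \<beta> = (\<Sum>i\<in>S. \<bar>\<beta> $ i\<bar>)"

definition phi :: "real^'p::finite^'n::finite \<Rightarrow> 'p set \<Rightarrow> ereal" where
  "phi X S = (INF \<beta> \<in> {\<beta>. l1on (- S) \<beta> \<le> 7 * l1on S \<beta> \<and> (\<exists>i\<in>S. \<beta> $ i \<noteq> 0)}.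
      ereal (norm (X *v \<beta>) * sqrt (real (card S)) / (colmax X * l1on S \<beta>)))"

definition phibar :: "real^'p::finite^'n::finite \<Rightarrow> nat \<Rightarrow> ereal" where
  "phibar X s = (INF \<beta> \<in> {\<beta>. card (supp \<beta>) \<noteq> 0 \<and> card (supp \<beta>) \<le> s}.
      ereal (norm (X *v \<beta>) * sqrt (real (card (supp \<beta>))) / (colmax X * l1on UNIV \<beta>)))"

definition phitilde :: "real^'p::finite^'n::finite \<Rightarrow> nat \<Rightarrow> ereal" where
  "phitilde X s = (INF \<beta> \<in> {\<beta>. card (supp \<beta>) \<noteq> 0 \<and> card (supp \<beta>) \<le> s}.
      ereal (norm (X *v \<beta>) / (colmax X * norm \<beta>)))"

text \<open>Mutual coherence; the maximum over the empty set (p = 1) is taken to be 0.\<close>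
definition mc :: "real^'p::finite^'n::finite \<Rightarrow> real" where
  "mc X = Max (insert 0 {\<bar>inner (column i X) (column j X)\<bar> / (norm (column i X) * norm (column j X))
                        | i j. i \<noteq> j})"

end

theory Submission imports Defs begin

lemma cs_sum:
  fixes u :: "'a \<Rightarrow> real"
  assumes "finite T"
  shows "(\<Sum>i\<in>T. \<bar>u i\<bar>)^2 \<le> real (card T) * (\<Sum>i\<in>T. (u i)^2)"
proof -
  have "(\<Sum>i\<in>T. \<bar>u i\<bar>)^2 = (\<Sum>i\<in>T. \<Sum>j\<in>T. \<bar>u i\<bar> * \<bar>u j\<bar>)"
    by (simp add: power2_eq_square sum_product)
  also have "\<dots> \<le> (\<Sum>i\<in>T. \<Sum>j\<in>T. ((u i)^2 + (u j)^2)/2)"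
  proof (intro sum_mono)
    fix i j
    have "0 \<le> (\<bar>u i\<bar> - \<bar>u j\<bar>)^2" by simp
    then show "\<bar>u i\<bar> * \<bar>u j\<bar> \<le> ((u i)^2 + (u j)^2)/2"
      by (simp add: power2_eq_square algebra_simps)
  qed
  also have "\<dots> = real (card T) * (\<Sum>i\<in>T. (u i)^2)"
    by (simp add: sum.distrib add_divide_distrib sum_divide_distrib[symmetric] sum.swap[of "\<lambda>i j. (u j)^2"] sum_distrib_left)
  finally show ?thesis .
qed

lemma quad_lower:
  fixes g :: "'a::finite \<Rightarrow> 'a \<Rightarrow> real"
  assumes "\<And>i. g i i \<ge> B" "\<And>i j. i \<noteq> j \<Longrightarrow> \<bar>g i j\<bar> \<le> M" "M \<ge> 0"
  shows "(\<Sum>i\<in>UNIV. \<Sum>j\<in>UNIV. u i * u j * g i j) \<ge> (B + M) * (\<Sum>i\<in>UNIV. (u i)^2) - M * (\<Sum>i\<in>UNIV. \<bar>u i\<bar>)^2"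
proof -
  have "(\<Sum>i\<in>UNIV. \<Sum>j\<in>UNIV. u i * u j * g i j) \<ge> (\<Sum>i\<in>UNIV. \<Sum>j\<in>UNIV. (if i = j then (B+M) * (u i)^2 else 0) - M * (\<bar>u i\<bar> * \<bar>u j\<bar>))"
  proof (intro sum_mono)
    fix i j
    show "(if i = j then (B+M) * (u i)^2 else 0) - M * (\<bar>u i\<bar> * \<bar>u j\<bar>) \<le> u i * u j * g i j"
    proof (cases "i = j")
      case True
      have "B * (u i)^2 \<le> g i i * (u i)^2" using assms(1) by (simp add: mult_right_mono)
      then show ?thesis using True by (simp add: power2_eq_square algebra_simps)
    next
      case False
      have "\<bar>u i * u j * g i j\<bar> \<le> (\<bar>u i\<bar> * \<bar>u j\<bar>) * M"
        using assms(2)[OF False] by (simp add: abs_mult mult_left_mono)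
      then show ?thesis using False by (simp add: algebra_simps)
    qed
  qed
  also have "M * (\<Sum>i\<in>UNIV. \<bar>u i\<bar>)^2 = (\<Sum>i\<in>UNIV. \<Sum>j\<in>UNIV. M * (\<bar>u i\<bar> * \<bar>u j\<bar>))"
  proof -
    have "(\<Sum>i\<in>UNIV. \<bar>u i\<bar>)^2 = (\<Sum>i\<in>UNIV. \<Sum>j\<in>UNIV. \<bar>u i\<bar> * \<bar>u j\<bar>)"
      by (simp only: power2_eq_square sum_product)
    then show ?thesis by (simp add: sum_distrib_left)
  qed
  then have "(\<Sum>i\<in>UNIV. \<Sum>j\<in>UNIV. (if i = j then (B+M) * (u i)^2 else 0) - M * (\<bar>u i\<bar> * \<bar>u j\<bar>))
     = (B + M) * (\<Sum>i\<in>UNIV. (u i)^2) - M * (\<Sum>i\<in>UNIV. \<bar>u i\<bar>)^2"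
    by (simp add: sum_subtractf sum_distrib_left)
  finally show ?thesis .
qed

lemma cross_bound:
  fixes g :: "'a::finite \<Rightarrow> 'a \<Rightarrow> real"
  assumes "\<And>i j. i \<noteq> j \<Longrightarrow> \<bar>g i j\<bar> \<le> M" "\<And>i. u i * v i = 0"
  shows "\<bar>\<Sum>i\<in>UNIV. \<Sum>j\<in>UNIV. u i * v j * g i j\<bar> \<le> M * (\<Sum>i\<in>UNIV. \<bar>u i\<bar>) * (\<Sum>i\<in>UNIV. \<bar>v i\<bar>)"
proof -
  have "\<bar>\<Sum>i\<in>UNIV. \<Sum>j\<in>UNIV. u i * v j * g i j\<bar> \<le> (\<Sum>i\<in>UNIV. \<Sum>j\<in>UNIV. \<bar>u i * v j * g i j\<bar>)"
    by (rule order_trans[OF sum_abs sum_mono[OF sum_abs]])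
  also have "\<dots> \<le> (\<Sum>i\<in>UNIV. \<Sum>j\<in>UNIV. M * (\<bar>u i\<bar> * \<bar>v j\<bar>))"
  proof (intro sum_mono)
    fix i j
    show "\<bar>u i * v j * g i j\<bar> \<le> M * (\<bar>u i\<bar> * \<bar>v j\<bar>)"
    proof (cases "i = j")
      case True
      have z: "u i * v j = 0" using True assms(2)[of i] by simp
      have "\<bar>u i\<bar> * \<bar>v j\<bar> = 0" using z by (simp add: abs_mult[symmetric])
      then show ?thesis using z by auto
    next
      case False
      have "\<bar>u i * v j * g i j\<bar> = \<bar>g i j\<bar> * (\<bar>u i\<bar> * \<bar>v j\<bar>)" by (simp add: abs_mult)
      also have "\<dots> \<le> M * (\<bar>u i\<bar> * \<bar>v j\<bar>)"
        by (rule mult_right_mono) (use assms(1)[OF False] in auto)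
      finally show ?thesis .
    qed
  qed
  also have "(\<Sum>i\<in>UNIV. \<Sum>j\<in>UNIV. M * (\<bar>u i\<bar> * \<bar>v j\<bar>)) = M * (\<Sum>i\<in>UNIV. \<bar>u i\<bar>) * (\<Sum>i\<in>UNIV. \<bar>v i\<bar>)"
    by (simp only: mult.assoc sum_product) (simp only: sum_distrib_left)
  finally show ?thesis .
qed

lemma ereal_sq_mono:
  fixes x y :: ereal
  assumes "0 \<le> x" "x \<le> y" shows "x^2 \<le> y^2"
  using assms by (cases x; cases y) (auto intro: power_mono)

lemma ereal_inf_sq:
  fixes f :: "'a \<Rightarrow> real"
  assumes "\<And>x. x \<in> A \<Longrightarrow> 0 \<le> f x" "\<And>x. x \<in> A \<Longrightarrow> c \<le> (f x)^2"
  shows "ereal c \<le> (INF x\<in>A. ereal (f x))^2"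
proof (cases "c \<le> 0")
  case True
  have "0 \<le> (INF x\<in>A. ereal (f x))" by (rule INF_greatest) (use assms(1) in simp)
  then have "0 \<le> (INF x\<in>A. ereal (f x))^2" by simp
  moreover have "ereal c \<le> 0" using True by simp
  ultimately show ?thesis by (meson order.trans)
next
  case False
  have "ereal (sqrt c) \<le> (INF x\<in>A. ereal (f x))"
  proof (rule INF_greatest)
    fix x assume "x \<in> A"
    then show "ereal (sqrt c) \<le> ereal (f x)" using assms[of x] by (simp add: real_le_lsqrt)
  qed
  from ereal_sq_mono[OF _ this] False show ?thesis by simp
qed

lemma Xv: "(X::real^'p::finite^'n::finite) *v u = (\<Sum>i\<in>UNIV. (u$i) *\<^sub>R column i X)"
  by (simp add: vec_eq_iff matrix_vector_mult_def column_def mult.commute)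

lemma inner_X: "inner ((X::real^'p::finite^'n::finite) *v u) (X *v v) =
   (\<Sum>i\<in>UNIV. \<Sum>j\<in>UNIV. u$i * v$j * inner (column i X) (column j X))"
  unfolding Xv inner_sum_left unfolding inner_sum_right by (simp add: mult.assoc mult.left_commute)

lemma norm_sq_vec: "(norm (b::real^'p::finite))^2 = (\<Sum>i\<in>UNIV. (b$i)^2)"
proof -
  have "(norm b)^2 = inner b b" by (rule power2_norm_eq_inner)
  then show ?thesis by (simp add: inner_vec_def power2_eq_square)
qed

lemma colmax_ge: "norm (column i X) \<le> colmax (X::real^'p::finite^'n::finite)"
  unfolding colmax_def by (rule Max_ge) auto

lemma colmax_nonneg: "colmax X \<ge> 0"
  using colmax_ge[of undefined X] norm_ge_zero order_trans by blast

lemma colmax_pos: "column i X \<noteq> 0 \<Longrightarrow> colmax (X::real^'p::finite^'n::finite) > 0"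
  using colmax_ge[of i X] by (metis zero_less_norm_iff order_less_le_trans)

lemma mc_nonneg: "mc X \<ge> 0"
  unfolding mc_def
proof (rule Max_ge)
  have "{\<bar>inner (column i X) (column j X)\<bar> / (norm (column i X) * norm (column j X)) | i j. i \<noteq> j}
     \<subseteq> (\<lambda>(i,j). \<bar>inner (column i X) (column j X)\<bar> / (norm (column i X) * norm (column j X))) ` UNIV"
    by auto
  note sub = this
  show "finite (insert 0 {\<bar>inner (column i X) (column j X)\<bar> / (norm (column i X) * norm (column j X)) | i j. i \<noteq> j})"
  proof -
    have "finite {\<bar>inner (column i X) (column j X)\<bar> / (norm (column i X) * norm (column j X)) | i j. i \<noteq> j}"
      by (rule finite_subset[OF sub]) simp
    then show ?thesis by simp
  qed
qed simp

lemma mc_ge: assumes "i \<noteq> j"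
  shows "\<bar>inner (column i X) (column j X)\<bar> / (norm (column i X) * norm (column j X)) \<le> mc (X::real^'p::finite^'n::finite)"
  unfolding mc_def
proof (rule Max_ge)
  have "{\<bar>inner (column i X) (column j X)\<bar> / (norm (column i X) * norm (column j X)) | i j. i \<noteq> j}
     \<subseteq> (\<lambda>(i,j). \<bar>inner (column i X) (column j X)\<bar> / (norm (column i X) * norm (column j X))) ` UNIV"
    by auto
  note sub = this
  show "finite (insert 0 {\<bar>inner (column i X) (column j X)\<bar> / (norm (column i X) * norm (column j X)) | i j. i \<noteq> j})"
  proof -
    have "finite {\<bar>inner (column i X) (column j X)\<bar> / (norm (column i X) * norm (column j X)) | i j. i \<noteq> j}"
      by (rule finite_subset[OF sub]) simp
    then show ?thesis by simp
  qed
qed (use assms in blast)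

lemma g_bound:
  assumes "\<forall>i. column i X \<noteq> 0" "i \<noteq> j"
  shows "\<bar>inner (column i X) (column j X)\<bar> \<le> mc (X::real^'p::finite^'n::finite) * (colmax X)^2"
proof -
  have p: "norm (column i X) > 0" "norm (column j X) > 0" using assms by auto
  have "\<bar>inner (column i X) (column j X)\<bar> \<le> mc X * (norm (column i X) * norm (column j X))"
    using mc_ge[OF assms(2), of X] p by (simp add: divide_le_eq mult.commute)
  also have "\<dots> \<le> mc X * (colmax X * colmax X)"
    by (intro mult_left_mono mult_mono colmax_ge mc_nonneg colmax_nonneg) auto
  finally show ?thesis by (simp add: power2_eq_square)
qed

lemma quad_X:
  assumes "\<forall>i. column i X \<noteq> 0" "\<And>i. bC \<le> norm (column i X)" "0 \<le> bC"
  shows "(norm ((X::real^'p::finite^'n::finite) *v u))^2 \<ge>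
     (bC^2 + mc X * (colmax X)^2) * (\<Sum>i\<in>UNIV. (u$i)^2) - mc X * (colmax X)^2 * (\<Sum>i\<in>UNIV. \<bar>u$i\<bar>)^2"
proof -
  have "(norm (X *v u))^2 = (\<Sum>i\<in>UNIV. \<Sum>j\<in>UNIV. u$i * u$j * inner (column i X) (column j X))"
    by (simp add: power2_norm_eq_inner inner_X)
  moreover have "(\<Sum>i\<in>UNIV. \<Sum>j\<in>UNIV. u$i * u$j * inner (column i X) (column j X)) \<ge>
     (bC^2 + mc X * (colmax X)^2) * (\<Sum>i\<in>UNIV. (u$i)^2) - mc X * (colmax X)^2 * (\<Sum>i\<in>UNIV. \<bar>u$i\<bar>)^2"
  proof (rule quad_lower[where g="\<lambda>i j. inner (column i X) (column j X)" and u="\<lambda>i. u$i"])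
    fix i
    have "bC^2 \<le> (norm (column i X))^2" using assms(2,3) by (intro power_mono) auto
    then show "bC^2 \<le> inner (column i X) (column i X)" by (simp add: power2_norm_eq_inner)
  next
    fix i j :: 'p assume "i \<noteq> j"
    then show "\<bar>inner (column i X) (column j X)\<bar> \<le> mc X * (colmax X)^2"
      using g_bound[OF assms(1)] by blast
  next
    show "0 \<le> mc X * (colmax X)^2" by (simp add: mc_nonneg)
  qed
  ultimately show ?thesis by simp
qed

lemma sum_supp:
  fixes \<beta> :: "real^'p::finite"
  assumes "\<And>x. h 0 = (0::real)"
  shows "(\<Sum>i\<in>UNIV. h (\<beta>$i)) = (\<Sum>i\<in>supp \<beta>. h (\<beta>$i))"
  by (rule sum.mono_neutral_right) (auto simp: supp_def assms)

lemma phibar1_facts: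
  fixes X :: "real^'p::finite^'n::finite"
  assumes "\<forall>i. column i X \<noteq> 0"
  shows "0 \<le> real_of_ereal (phibar X 1) \<and> (\<forall>i. real_of_ereal (phibar X 1) * colmax X \<le> norm (column i X))"
proof -
  have Cpos: "colmax X > 0" using colmax_pos assms by blast
  obtain i0 :: 'p where True by simp
  have val: "phibar X 1 \<le> ereal (norm (column i X) / colmax X)" for i
  proof -
    let ?e = "axis i (1::real)"
    have supp: "supp ?e = {i}" by (auto simp: supp_def axis_def)
    have l1: "l1on UNIV ?e = 1" by (simp add: l1on_def axis_def)
    have "X *v ?e = (\<Sum>ia\<in>UNIV. if ia = i then column ia X else 0)"
      unfolding Xv by (rule sum.cong) (auto simp: axis_def)
    then have Xe: "X *v ?e = column i X" by simp
    have "phibar X 1 \<le> ereal (norm (X *v ?e) * sqrt (real (card (supp ?e))) / (colmax X * l1on UNIV ?e))"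
      unfolding phibar_def by (rule INF_lower) (simp add: supp)
    then show ?thesis by (simp add: supp l1 Xe)
  qed
  have nn: "0 \<le> phibar X 1"
    unfolding phibar_def
  proof (rule INF_greatest)
    fix \<beta> :: "real^'p"
    have "0 \<le> l1on UNIV \<beta>" by (simp add: l1on_def sum_nonneg)
    then show "0 \<le> ereal (norm (X *v \<beta>) * sqrt (real (card (supp \<beta>))) / (colmax X * l1on UNIV \<beta>))"
      using Cpos by simp
  qed
  have fin: "phibar X 1 = ereal (real_of_ereal (phibar X 1))"
    using val[of i0] nn by (cases "phibar X 1") auto
  have "real_of_ereal (phibar X 1) * colmax X \<le> norm (column i X)" for i
  proof -
    have "ereal (real_of_ereal (phibar X 1)) \<le> ereal (norm (column i X) / colmax X)"
      using val[of i] fin by simp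
    then have "real_of_ereal (phibar X 1) \<le> norm (column i X) / colmax X" by simp
    then show ?thesis using Cpos by (simp add: le_divide_eq)
  qed
  moreover have "0 \<le> real_of_ereal (phibar X 1)" using nn fin
    by (metis ereal_less_eq(5))
  ultimately show ?thesis by blast
qed

theorem lemma1:
  fixes X :: "real^'p::finite^'n::finite" and S :: "'p set" and s :: nat
  assumes "\<forall>i. column i X \<noteq> 0"
    and "s > 0"
  shows "phi X S ^ 2 \<ge> ereal ((real_of_ereal (phibar X 1))^2 - 15 * real (card S) * mc X)
    \<and> phibar X s ^ 2 \<ge> phitilde X s ^ 2
    \<and> phitilde X s ^ 2 \<ge> ereal ((real_of_ereal (phibar X 1))^2 - real s * mc X)"
proof -
  define b where "b = real_of_ereal (phibar X 1)"
  define C where "C = colmax X"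
  define m where "m = mc X"
  have Cpos: "C > 0" unfolding C_def using colmax_pos assms(1) by blast
  have b0: "0 \<le> b" and bC: "\<And>i. b * C \<le> norm (column i X)"
    using phibar1_facts[OF assms(1)] unfolding b_def C_def by auto
  have m0: "0 \<le> m" unfolding m_def by (rule mc_nonneg)
  have bC0: "0 \<le> b * C" using b0 Cpos by simp
  have quad: "(norm (X *v u))^2 \<ge> (b^2*C^2 + m*C^2) * (\<Sum>i\<in>UNIV. (u$i)^2) - m*C^2 * (\<Sum>i\<in>UNIV. \<bar>u$i\<bar>)^2" for u
    using quad_X[OF assms(1) bC bC0, of u] unfolding C_def m_def by (simp add: power_mult_distrib)
  have c3: "b^2 - real s * m \<le> (norm (X *v \<beta>) / (C * norm \<beta>))^2"
    if "card (supp \<beta>) \<noteq> 0" "card (supp \<beta>) \<le> s" for \<beta> :: "real^'p"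
  proof -
    define k where "k = card (supp \<beta>)"
    define q where "q = (\<Sum>i\<in>UNIV. (\<beta>$i)^2)"
    define l where "l = (\<Sum>i\<in>UNIV. \<bar>\<beta>$i\<bar>)"
    have qn: "q = (norm \<beta>)^2" unfolding q_def by (simp add: norm_sq_vec)
    have "supp \<beta> \<noteq> {}" using that(1) by auto
    then have "\<beta> \<noteq> 0" by (auto simp: supp_def)
    then have qpos: "q > 0" using qn by simp
    have "l^2 \<le> real k * q"
      unfolding l_def q_def k_def
      using sum_supp[of abs \<beta>] sum_supp[of "\<lambda>x. x^2" \<beta>] cs_sum[of "supp \<beta>" "\<lambda>i. \<beta>$i"] by simp
    moreover have "real k * q \<le> real s * q"
      using that(2) qpos unfolding k_def by (intro mult_right_mono) auto
    ultimately have l2: "l^2 \<le> real s * q" by linarith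
    have mC0: "0 \<le> m*C^2" using m0 by simp
    have E1: "m*C^2 * l^2 \<le> m*C^2 * (real s * q)"
      by (rule mult_left_mono[OF l2 mC0])
    have E2: "(norm (X *v \<beta>))^2 \<ge> (b^2*C^2 + m*C^2) * q - m*C^2 * l^2"
      using quad[of \<beta>] unfolding l_def q_def .
    have E3: "(b^2*C^2 + m*C^2) * q = b^2*C^2*q + m*C^2*q" by (simp add: algebra_simps)
    have E4: "(b^2 - real s * m) * (C^2 * q) = b^2*C^2*q - m*C^2 * (real s * q)" by (simp add: algebra_simps)
    have E5: "0 \<le> m*C^2*q" using mC0 qpos by simp
    have main: "(b^2 - real s * m) * (C^2 * q) \<le> (norm (X *v \<beta>))^2"
      using E1 E2 E3 E4 E5 by linarith
    have eqf: "(norm (X *v \<beta>) / (C * norm \<beta>))^2 = (norm (X *v \<beta>))^2 / (C^2 * q)"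
      using qn by (simp add: power_divide power_mult_distrib)
    have "0 < C^2 * q" using Cpos qpos by simp
    then show ?thesis unfolding eqf using main by (simp add: le_divide_eq)
  qed
  have part3: "phitilde X s ^ 2 \<ge> ereal (b^2 - real s * m)"
    unfolding phitilde_def C_def[symmetric]
    by (rule ereal_inf_sq) (use c3 Cpos in auto)
  have part2: "phibar X s ^ 2 \<ge> phitilde X s ^ 2"
  proof (rule ereal_sq_mono)
    show "0 \<le> phitilde X s" unfolding phitilde_def
      by (rule INF_greatest) (use Cpos in \<open>simp add: C_def[symmetric]\<close>)
    show "phitilde X s \<le> phibar X s"
      unfolding phitilde_def phibar_def C_def[symmetric]
    proof (rule INF_mono)
      fix \<beta> :: "real^'p" assume "\<beta> \<in> {\<beta>. card (supp \<beta>) \<noteq> 0 \<and> card (supp \<beta>) \<le> s}"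
      then have cnz: "card (supp \<beta>) \<noteq> 0" by auto
      define k where "k = card (supp \<beta>)"
      define l where "l = l1on UNIV \<beta>"
      have lsum: "l = (\<Sum>i\<in>UNIV. \<bar>\<beta>$i\<bar>)" by (simp add: l_def l1on_def)
      have "supp \<beta> \<noteq> {}" using cnz by auto
      then obtain i where i: "\<beta>$i \<noteq> 0" by (auto simp: supp_def)
      have lpos: "l > 0"
      proof -
        have "\<bar>\<beta>$i\<bar> \<le> l" unfolding lsum by (rule member_le_sum) auto
        then show ?thesis using i by simp
      qed
      have kpos: "real k > 0" by (metis cnz k_def of_nat_0_less_iff neq0_conv)
      have "l^2 \<le> real k * (norm \<beta>)^2"
        unfolding lsum k_def norm_sq_vec
        using sum_supp[of abs \<beta>] sum_supp[of "\<lambda>x. x^2" \<beta>] cs_sum[of "supp \<beta>" "\<lambda>i. \<beta>$i"] by simp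
      also have "\<dots> = (sqrt (real k) * norm \<beta>)^2" using kpos by (simp add: power_mult_distrib)
      finally have lle: "l \<le> sqrt (real k) * norm \<beta>"
        by (rule power2_le_imp_le) simp
      have eq: "norm (X *v \<beta>) / (C * norm \<beta>) = norm (X *v \<beta>) * sqrt (real k) / (C * (sqrt (real k) * norm \<beta>))"
        using kpos by simp
      have "norm (X *v \<beta>) * sqrt (real k) / (C * (sqrt (real k) * norm \<beta>)) \<le> norm (X *v \<beta>) * sqrt (real k) / (C * l)"
        by (rule frac_le) (use Cpos lpos lle in auto)
      then have "ereal (norm (X *v \<beta>) / (C * norm \<beta>)) \<le> ereal (norm (X *v \<beta>) * sqrt (real (card (supp \<beta>))) / (C * l1on UNIV \<beta>))"
        using eq unfolding k_def l_def by simp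
      then show "\<exists>\<beta>'\<in>{\<beta>. card (supp \<beta>) \<noteq> 0 \<and> card (supp \<beta>) \<le> s}.
          ereal (norm (X *v \<beta>') / (C * norm \<beta>')) \<le> ereal (norm (X *v \<beta>) * sqrt (real (card (supp \<beta>))) / (C * l1on UNIV \<beta>))"
        using \<open>\<beta> \<in> _\<close> by blast
    qed
  qed
  have c1: "b^2 - 15 * real (card S) * m \<le> (norm (X *v \<beta>) * sqrt (real (card S)) / (C * l1on S \<beta>))^2"
    if h1: "l1on (- S) \<beta> \<le> 7 * l1on S \<beta>" and h2: "\<exists>i\<in>S. \<beta> $ i \<noteq> 0" for \<beta> :: "real^'p"
  proof -
    define k where "k = card S"
    define u where "u = (\<chi> i. if i \<in> S then \<beta>$i else 0)"
    define v where "v = (\<chi> i. if i \<in> S then 0 else \<beta>$i)"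
    define a where "a = l1on S \<beta>"
    define qu where "qu = (\<Sum>i\<in>UNIV. (u$i)^2)"
    obtain i where i: "i \<in> S" "\<beta>$i \<noteq> 0" using h2 by blast
    have Sne: "S \<noteq> {}" using i by auto
    have kpos: "real k > 0" unfolding k_def using Sne by (simp add: card_gt_0_iff)
    have buv: "\<beta> = u + v" by (simp add: u_def v_def vec_eq_iff)
    have ua: "(\<Sum>i\<in>UNIV. \<bar>u$i\<bar>) = a"
    proof -
      have "(\<Sum>i\<in>UNIV. \<bar>u$i\<bar>) = (\<Sum>i\<in>UNIV. if i \<in> S then \<bar>\<beta>$i\<bar> else 0)"
        by (rule sum.cong) (auto simp: u_def)
      also have "\<dots> = a" by (simp add: sum.inter_restrict[symmetric] a_def l1on_def)
      finally show ?thesis .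
    qed
    have va: "(\<Sum>i\<in>UNIV. \<bar>v$i\<bar>) = l1on (- S) \<beta>"
    proof -
      have "(\<Sum>i\<in>UNIV. \<bar>v$i\<bar>) = (\<Sum>i\<in>UNIV. if i \<in> - S then \<bar>\<beta>$i\<bar> else 0)"
        by (rule sum.cong) (auto simp: v_def)
      also have "\<dots> = l1on (- S) \<beta>"
        using sum.inter_restrict[of UNIV "\<lambda>i. \<bar>\<beta>$i\<bar>" "- S"] by (simp add: l1on_def)
      finally show ?thesis .
    qed
    have qS: "qu = (\<Sum>i\<in>S. (\<beta>$i)^2)"
    proof -
      have "qu = (\<Sum>i\<in>UNIV. if i \<in> S then (\<beta>$i)^2 else 0)"
        unfolding qu_def by (rule sum.cong) (auto simp: u_def)
      also have "\<dots> = (\<Sum>i\<in>S. (\<beta>$i)^2)" by (simp add: sum.inter_restrict[symmetric])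
      finally show ?thesis .
    qed
    have apos: "a > 0"
    proof -
      have "\<bar>\<beta>$i\<bar> \<le> a" unfolding a_def l1on_def by (rule member_le_sum) (use i in auto)
      then show ?thesis using i by simp
    qed
    have aq: "a^2 \<le> real k * qu"
      unfolding a_def l1on_def qS k_def by (rule cs_sum) simp
    have disj: "\<And>i. u$i * v$i = 0" by (simp add: u_def v_def)
    have cross: "\<bar>inner (X *v u) (X *v v)\<bar> \<le> m * C^2 * a * (7 * a)"
    proof -
      have "\<bar>inner (X *v u) (X *v v)\<bar> \<le> m * C^2 * (\<Sum>i\<in>UNIV. \<bar>u$i\<bar>) * (\<Sum>i\<in>UNIV. \<bar>v$i\<bar>)"
        unfolding inner_X
        by (rule cross_bound[where g="\<lambda>i j. inner (column i X) (column j X)" and u="\<lambda>i. u$i" and v="\<lambda>i. v$i"])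
           (use g_bound[OF assms(1)] disj in \<open>auto simp: m_def C_def\<close>)
      also have "\<dots> \<le> m * C^2 * a * (7 * a)"
        unfolding ua va using h1 m0 apos unfolding a_def
        by (intro mult_left_mono) auto
      finally show ?thesis .
    qed
    have nsplit: "(norm (X *v \<beta>))^2 \<ge> (norm (X *v u))^2 - 2 * \<bar>inner (X *v u) (X *v v)\<bar>"
    proof -
      have "(norm (X *v \<beta>))^2 = (norm (X *v u))^2 + 2 * inner (X *v u) (X *v v) + (norm (X *v v))^2"
        unfolding buv matrix_vector_right_distrib power2_norm_eq_inner
        by (simp add: inner_add_left inner_add_right inner_commute)
      then show ?thesis by (smt (verit) zero_le_power2)
    qed
    have qu_u: "(norm (X *v u))^2 \<ge> (b^2*C^2 + m*C^2) * qu - m*C^2 * a^2"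
      using quad[of u] unfolding qu_def ua .
    have B0: "0 \<le> b^2*C^2 + m*C^2" using m0 by simp
    have main: "real k * (norm (X *v \<beta>))^2 \<ge> (b^2 - 15 * real k * m) * (C^2 * a^2)"
    proof -
      have F0: "(norm (X *v \<beta>))^2 \<ge> (b^2*C^2 + m*C^2) * qu - m*C^2 * a^2 - 2 * (m * C^2 * a * (7 * a))"
        using nsplit qu_u cross by linarith
      have F1: "real k * (norm (X *v \<beta>))^2 \<ge> real k * ((b^2*C^2 + m*C^2) * qu - m*C^2 * a^2 - 2 * (m * C^2 * a * (7 * a)))"
        using F0 kpos by (intro mult_left_mono) auto
      have F2: "real k * ((b^2*C^2 + m*C^2) * qu - m*C^2 * a^2 - 2 * (m * C^2 * a * (7 * a)))
         = (b^2*C^2 + m*C^2) * (real k * qu) - 15 * (real k * (m*C^2*a^2))"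
        by (simp add: algebra_simps power2_eq_square)
      have F3: "(b^2*C^2 + m*C^2) * (real k * qu) \<ge> (b^2*C^2 + m*C^2) * a^2"
        using aq B0 by (intro mult_left_mono)
      have F4: "(b^2*C^2 + m*C^2) * a^2 = b^2*C^2*a^2 + m*C^2*a^2" by (simp add: algebra_simps)
      have F5: "(b^2 - 15 * real k * m) * (C^2 * a^2) = b^2*C^2*a^2 - 15 * (real k * (m*C^2*a^2))"
        by (simp add: algebra_simps)
      have F6: "0 \<le> m*C^2*a^2" using m0 by simp
      have F7: "0 \<le> real k * (m*C^2*a^2)" using F6 kpos by simp
      show ?thesis using F1 F2 F3 F4 F5 F6 F7 by linarith
    qed
    have eqf: "(norm (X *v \<beta>) * sqrt (real (card S)) / (C * l1on S \<beta>))^2 = real k * (norm (X *v \<beta>))^2 / (C^2 * a^2)"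
      using kpos unfolding a_def k_def by (simp add: power_divide power_mult_distrib mult.commute)
    have "0 < C^2 * a^2" using Cpos apos by simp
    then show ?thesis unfolding eqf using main unfolding k_def by (simp add: le_divide_eq)
  qed
  have part1: "phi X S ^ 2 \<ge> ereal (b^2 - 15 * real (card S) * m)"
    unfolding phi_def C_def[symmetric]
  proof (rule ereal_inf_sq)
    fix \<beta> :: "real^'p" assume "\<beta> \<in> {\<beta>. l1on (- S) \<beta> \<le> 7 * l1on S \<beta> \<and> (\<exists>i\<in>S. \<beta> $ i \<noteq> 0)}"
    then show "b^2 - 15 * real (card S) * m \<le> (norm (X *v \<beta>) * sqrt (real (card S)) / (C * l1on S \<beta>))^2"
      using c1 by blast
    have "0 \<le> l1on S \<beta>" by (simp add: l1on_def sum_nonneg)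
    then show "0 \<le> norm (X *v \<beta>) * sqrt (real (card S)) / (C * l1on S \<beta>)" using Cpos by simp
  qed
  show ?thesis using part1 part2 part3 unfolding b_def m_def by blast
qed

end
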